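(* Let $\Sigma$ be a set containing $0$, $(\Gamma,\oplus)$ an abelian group, and $f:\Sigma^n\to\Gamma$. Suppose $f(\bar x)=\bigoplus_{i=1}^k f_i(\bar x_{K_i})=\bigoplus_{j=1}^l g_j(\bar x_{L_j})$ for all $\bar x\in\Sigma^n$, where $\{K_1,\ldots,K_k\}$ and $\{L_1,\ldots,L_l\}$ are partitions of $[n]$ into nonempty sets and every $f_i$ and every $g_j$ has non-separable arguments. Then $\{K_1,\ldots,K_k\}=\{L_1,\ldots,L_l\}$ (so $k=l$), and whenever $K_i=L_j$ the function $f_i\ominus g_j$ is constant.
   Context: $[n]=\{1,\ldots,n\}$; for $M=\{i_1<\cdots<i_m\}\subseteq[n]$ and $\bar x=(x_1,\ldots,x_n)$, $\bar x_M=(x_{i_1},\ldots,x_{i_m})$. A function $h:\Sigma^m\to\Gamma$ has $P$-separable arguments (for a partition $P=\{P_1,\ldots,P_p\}$ of $[m]$ into nonempty sets) if there exist functions $h_j:\Sigma^{|P_j|}\to\Gamma$ with $h(\bar x)=h_1(\bar x_{P_1})\oplus\cdots\oplus h_p(\bar x_{P_p})$ for all $\bar x$; $h$ has non-separable arguments if $h$ has $P$-separable arguments only for the one-block partition $P=\{[m]\}$. *)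

theory Defs
  imports Main "HOL-Library.Disjoint_Sets"
begin

text \<open>Tuples in Sigma^m are lists of length m with entries in the carrier S.
  Coordinates are numbered 1..m.\<close>

definition tuples :: "'a set \<Rightarrow> nat \<Rightarrow> 'a list set" where
  "tuples S m = {xs. length xs = m \<and> set xs \<subseteq> S}"

definition restr :: "'a list \<Rightarrow> nat set \<Rightarrow> 'a list" where
  "restr xs M = map (\<lambda>i. xs ! (i - 1)) (sorted_list_of_set M)"

definition sep_args ::
  "'a set \<Rightarrow> nat \<Rightarrow> ('a list \<Rightarrow> 'g::comm_monoid_add) \<Rightarrow> nat set set \<Rightarrow> bool" where
  "sep_args S m h P \<longleftrightarrow> partition_on {1..m} P \<and>
     (\<exists>hs :: nat set \<Rightarrow> 'a list \<Rightarrow> 'g.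
        \<forall>xs \<in> tuples S m. h xs = (\<Sum>B\<in>P. hs B (restr xs B)))"

definition non_sep_args ::
  "'a set \<Rightarrow> nat \<Rightarrow> ('a list \<Rightarrow> 'g::comm_monoid_add) \<Rightarrow> bool" where
  "non_sep_args S m h \<longleftrightarrow> (\<forall>P. sep_args S m h P \<longrightarrow> P = {{1..m}})"

end

theory Submission
  imports Defs
begin

lemma restr_cong:
  assumes "finite B" "\<forall>i\<in>B. xs!(i-1) = xs'!(i-1)"
  shows "restr xs B = restr xs' B"
  using assms unfolding restr_def by (auto intro: map_cong)

lemma restr_eq_agree:
  assumes "finite C" "restr ys C = restr ys' C"
  shows "\<forall>j\<in>C. ys!(j-1) = ys'!(j-1)"
  using assms unfolding restr_def map_eq_conv by auto

lemma sep_from_sum: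
  fixes h :: "'a list \<Rightarrow> 'g::comm_monoid_add"
  assumes fin: "finite Q" and ne: "Q \<noteq> {}" and inj: "inj_on \<pi> Q"
    and part: "partition_on {1..m} (\<pi> ` Q)"
    and dep: "\<forall>B\<in>Q. \<forall>ys\<in>tuples S m. \<forall>ys'\<in>tuples S m.
        (\<forall>j\<in>\<pi> B. ys!(j-1) = ys'!(j-1)) \<longrightarrow> \<phi> B ys = \<phi> B ys'"
    and eq: "\<forall>ys\<in>tuples S m. h ys = (\<Sum>B\<in>Q. \<phi> B ys) + c"
  shows "sep_args S m h (\<pi> ` Q)"
proof -
  obtain B0 where B0: "B0 \<in> Q" using ne by blast
  define hs where "hs C ws = \<phi> (inv_into Q \<pi> C) (SOME ys. ys \<in> tuples S m \<and> restr ys C = ws)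
      + (if C = \<pi> B0 then c else 0)" for C ws
  have "h ys = (\<Sum>C\<in>\<pi> ` Q. hs C (restr ys C))" if ys: "ys \<in> tuples S m" for ys
  proof -
    have "(\<Sum>C\<in>\<pi> ` Q. hs C (restr ys C)) = (\<Sum>B\<in>Q. hs (\<pi> B) (restr ys (\<pi> B)))"
      using inj by (simp add: sum.reindex)
    also have "\<dots> = (\<Sum>B\<in>Q. \<phi> B ys + (if B = B0 then c else 0))"
    proof (rule sum.cong)
      fix B assume B: "B \<in> Q"
      have "\<pi> B \<subseteq> {1..m}" using partition_onD1[OF part] B by blast
      then have finB: "finite (\<pi> B)" using finite_subset by blast
      define ys' where "ys' = (SOME ys'. ys' \<in> tuples S m \<and> restr ys' (\<pi> B) = restr ys (\<pi> B))"
      have y': "ys' \<in> tuples S m \<and> restr ys' (\<pi> B) = restr ys (\<pi> B)"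
        unfolding ys'_def by (rule someI[of _ ys]) (use ys in blast)
      have ag: "\<forall>j\<in>\<pi> B. ys'!(j-1) = ys!(j-1)"
        using restr_eq_agree[OF finB] y' by blast
      have e1: "\<phi> B ys' = \<phi> B ys"
        using dep[rule_format, OF B] y' ys ag by blast
      have e2: "(\<pi> B = \<pi> B0) = (B = B0)" using inj_on_eq_iff[OF inj B B0] .
      have e3: "inv_into Q \<pi> (\<pi> B) = B" using inv_into_f_f[OF inj B] .
      have "hs (\<pi> B) (restr ys (\<pi> B)) = \<phi> B ys' + (if \<pi> B = \<pi> B0 then c else 0)"
        unfolding hs_def e3 ys'_def ..
      then show "hs (\<pi> B) (restr ys (\<pi> B)) = \<phi> B ys + (if B = B0 then c else 0)"
        unfolding e1 e2 .
    qed simp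
    also have "\<dots> = (\<Sum>B\<in>Q. \<phi> B ys) + c"
      using fin B0 by (simp add: sum.distrib)
    finally show ?thesis using eq ys by simp
  qed
  then show ?thesis unfolding sep_args_def using part by blast
qed

definition pos :: "nat set \<Rightarrow> nat \<Rightarrow> nat" where
  "pos K i = (THE k. k < card K \<and> sorted_list_of_set K ! k = i)"

lemma pos_props:
  assumes "finite K" "i \<in> K"
  shows "pos K i < card K \<and> sorted_list_of_set K ! pos K i = i"
proof -
  let ?sl = "sorted_list_of_set K"
  have d: "distinct ?sl" and l: "length ?sl = card K" and s: "set ?sl = K" using assms by auto
  have "\<exists>!k. k < card K \<and> ?sl ! k = i"
    using d l s assms(2) by (metis in_set_conv_nth nth_eq_iff_index_eq)
  then show ?thesis unfolding pos_def by (rule theI')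
qed

lemma pos_nth:
  assumes "finite K" "k < card K"
  shows "pos K (sorted_list_of_set K ! k) = k"
proof -
  let ?sl = "sorted_list_of_set K"
  have d: "distinct ?sl" and l: "length ?sl = card K" and s: "set ?sl = K" using assms by auto
  have "?sl ! k \<in> K" using l s assms by (metis nth_mem)
  then have "pos K (?sl ! k) < card K \<and> ?sl ! pos K (?sl ! k) = ?sl ! k"
    using pos_props assms by blast
  then show ?thesis using d l assms nth_eq_iff_index_eq by metis
qed

lemma pos_inj: "finite K \<Longrightarrow> inj_on (\<lambda>i. pos K i + 1) K"
  by (rule inj_onI) (metis pos_props add_right_cancel)

lemma pos_image: "finite K \<Longrightarrow> (\<lambda>i. pos K i + 1) ` K = {1..card K}"
proof
  assume f: "finite K"
  show "(\<lambda>i. pos K i + 1) ` K \<subseteq> {1..card K}" using pos_props[OF f] by fastforce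
  show "{1..card K} \<subseteq> (\<lambda>i. pos K i + 1) ` K"
  proof
    fix j assume j: "j \<in> {1..card K}"
    then have k: "j - 1 < card K" by auto
    have "sorted_list_of_set K ! (j-1) \<in> K" using f k by (metis nth_mem length_sorted_list_of_set set_sorted_list_of_set)
    moreover have "pos K (sorted_list_of_set K ! (j-1)) + 1 = j" using pos_nth[OF f k] j by auto
    ultimately show "j \<in> (\<lambda>i. pos K i + 1) ` K" by force
  qed
qed

definition emb :: "nat \<Rightarrow> 'a \<Rightarrow> nat set \<Rightarrow> 'a list \<Rightarrow> 'a list" where
  "emb n z K ys = map (\<lambda>i. if i \<in> K then ys ! pos K i else z) [1..<n+1]"

lemma emb_nth: "i \<in> {1..n} \<Longrightarrow> emb n z K ys ! (i-1) = (if i \<in> K then ys ! pos K i else z)"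
proof -
  assume i: "i \<in> {1..n}"
  then have a: "i - 1 < length [1..<n+1]" by auto
  have b: "[1..<n+1] ! (i-1) = i" using i by (auto simp del: upt_Suc)
  show ?thesis unfolding emb_def nth_map[OF a] b ..
qed

lemma emb_tuples:
  assumes "finite K" "ys \<in> tuples S (card K)" "z \<in> S"
  shows "emb n z K ys \<in> tuples S n"
proof -
  have l: "length ys = card K" and s: "set ys \<subseteq> S" using assms(2) unfolding tuples_def by auto
  have "(if i \<in> K then ys ! pos K i else z) \<in> S" for i
  proof (cases "i \<in> K")
    case True
    then have "pos K i < length ys" using pos_props[OF assms(1)] l by simp
    then show ?thesis using True s nth_mem by (simp add: subset_iff)
  qed (simp add: assms(3))
  then have "set (emb n z K ys) \<subseteq> S" unfolding emb_def set_map by blast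
  moreover have "length (emb n z K ys) = n" unfolding emb_def by simp
  ultimately show ?thesis unfolding tuples_def by blast
qed

lemma restr_emb_self:
  assumes "K \<subseteq> {1..n}" "finite K" "length ys = card K"
  shows "restr (emb n z K ys) K = ys"
proof (rule nth_equalityI)
  show "length (restr (emb n z K ys) K) = length ys" using assms by (simp add: restr_def)
  fix k assume "k < length (restr (emb n z K ys) K)"
  then have k: "k < card K" using assms by (simp add: restr_def)
  have m: "sorted_list_of_set K ! k \<in> K"
    using k assms by (metis nth_mem length_sorted_list_of_set set_sorted_list_of_set)
  have kl: "k < length (sorted_list_of_set K)" using k assms by simp
  have "restr (emb n z K ys) K ! k = emb n z K ys ! (sorted_list_of_set K ! k - 1)"
    unfolding restr_def nth_map[OF kl] ..
  also have "\<dots> = ys ! pos K (sorted_list_of_set K ! k)"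
    using emb_nth[of "sorted_list_of_set K ! k" n z K ys] m assms(1) by auto
  also have "\<dots> = ys ! k" using pos_nth[OF assms(2) k] by simp
  finally show "restr (emb n z K ys) K ! k = ys ! k" .
qed

lemma restr_emb_dep:
  assumes "B \<subseteq> {1..n}" "finite B" "\<forall>i\<in>B\<inter>K. ys ! pos K i = ys' ! pos K i"
  shows "restr (emb n z K ys) B = restr (emb n z K ys') B"
proof (rule restr_cong[OF assms(2)], intro ballI)
  fix i assume i: "i \<in> B"
  then have "i \<in> {1..n}" using assms(1) by blast
  then show "emb n z K ys ! (i-1) = emb n z K ys' ! (i-1)"
    using emb_nth[of i n z K] assms(3) i by simp
qed

lemma part_facts:
  fixes K :: "nat set set"
  assumes "partition_on {1..n} K"
  shows "finite K" "\<And>B. B \<in> K \<Longrightarrow> B \<subseteq> {1..n} \<and> finite B \<and> B \<noteq> {}"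
    "\<And>B B'. B \<in> K \<Longrightarrow> B' \<in> K \<Longrightarrow> B \<noteq> B' \<Longrightarrow> B \<inter> B' = {}"
proof -
  have "\<Union>K = {1..n}" using partition_onD1[OF assms] by simp
  then show "finite K" using finite_UnionD[of K] by simp
  show "B \<subseteq> {1..n} \<and> finite B \<and> B \<noteq> {}" if B: "B \<in> K" for B
  proof -
    have "B \<subseteq> {1..n}" using B \<open>\<Union>K = {1..n}\<close> by blast
    moreover have "B \<noteq> {}" using B partition_onD3[OF assms] by blast
    ultimately show ?thesis using finite_subset by blast
  qed
  show "B \<inter> B' = {}" if "B \<in> K" "B' \<in> K" "B \<noteq> B'" for B B'
    using disjointD[OF partition_onD2[OF assms] that] .
qed

lemma L_block:
  fixes F :: "'a list \<Rightarrow> 'g::ab_group_add"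
  assumes z: "z \<in> S" and p: "partition_on {1..n} K" and K0: "K0 \<in> K"
    and rep: "\<forall>xs \<in> tuples S n. F xs = (\<Sum>B\<in>K. f B (restr xs B))"
  shows "\<exists>c. \<forall>ys\<in>tuples S (card K0). F (emb n z K0 ys) = f K0 ys + c"
proof -
  note pf = part_facts[OF p]
  define y0 where "y0 = replicate (card K0) z"
  define c where "c = (\<Sum>B\<in>K-{K0}. f B (restr (emb n z K0 y0) B))"
  have "F (emb n z K0 ys) = f K0 ys + c" if ys: "ys \<in> tuples S (card K0)" for ys
  proof -
    have fK0: "finite K0" "K0 \<subseteq> {1..n}" using pf(2)[OF K0] by auto
    have "F (emb n z K0 ys) = (\<Sum>B\<in>K. f B (restr (emb n z K0 ys) B))"
      using rep emb_tuples[OF fK0(1) ys z] by blast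
    also have "\<dots> = f K0 (restr (emb n z K0 ys) K0) + (\<Sum>B\<in>K-{K0}. f B (restr (emb n z K0 ys) B))"
      using pf(1) K0 by (simp add: sum.remove)
    also have "restr (emb n z K0 ys) K0 = ys"
      using ys unfolding tuples_def by (intro restr_emb_self fK0) simp
    also have "(\<Sum>B\<in>K-{K0}. f B (restr (emb n z K0 ys) B)) = c"
      unfolding c_def
    proof (rule sum.cong)
      fix B assume B: "B \<in> K - {K0}"
      then have "B \<inter> K0 = {}" using pf(3)[of B K0] K0 by blast
      moreover have "B \<subseteq> {1..n}" "finite B" using pf(2)[of B] B by auto
      ultimately have "restr (emb n z K0 ys) B = restr (emb n z K0 y0) B"
        using restr_emb_dep[of B n K0 ys y0 z] by simp
      then show "f B (restr (emb n z K0 ys) B) = f B (restr (emb n z K0 y0) B)" by simp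
    qed simp
    finally show ?thesis .
  qed
  then show ?thesis by blast
qed

lemma contain:
  fixes F :: "'a list \<Rightarrow> 'g::ab_group_add"
  assumes z: "z \<in> S"
    and pK: "partition_on {1..n} K" and pL: "partition_on {1..n} L"
    and repK: "\<forall>xs \<in> tuples S n. F xs = (\<Sum>B\<in>K. f B (restr xs B))"
    and repL: "\<forall>xs \<in> tuples S n. F xs = (\<Sum>B\<in>L. g B (restr xs B))"
    and ns: "\<forall>B\<in>K. non_sep_args S (card B) (f B)"
    and K0: "K0 \<in> K"
  shows "\<exists>B\<in>L. K0 \<subseteq> B"
proof (rule ccontr)
  assume nc: "\<not> (\<exists>B\<in>L. K0 \<subseteq> B)"
  note pfK = part_facts[OF pK] and pfL = part_facts[OF pL]
  have fK0: "finite K0" "K0 \<subseteq> {1..n}" "K0 \<noteq> {}" using pfK(2)[OF K0] by auto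
  define m where "m = card K0"
  define L' where "L' = {B\<in>L. B \<inter> K0 \<noteq> {}}"
  define \<pi> where "\<pi> B = (\<lambda>i. pos K0 i + 1) ` (B \<inter> K0)" for B
  define \<phi> where "\<phi> B ys = g B (restr (emb n z K0 ys) B)" for B ys
  define y0 where "y0 = replicate m z"
  obtain c1 where c1: "\<forall>ys\<in>tuples S m. F (emb n z K0 ys) = f K0 ys + c1"
    using L_block[OF z pK K0 repK] unfolding m_def by blast
  define c2 where "c2 = (\<Sum>B\<in>L-L'. g B (restr (emb n z K0 y0) B))"
  have finL': "finite L'" using pfL(1) unfolding L'_def by simp
  have LL: "L' \<subseteq> L" unfolding L'_def by blast
  have cover: "\<Union>L = {1..n}" using partition_onD1[OF pL] by simp
  have eq: "\<forall>ys\<in>tuples S m. f K0 ys = (\<Sum>B\<in>L'. \<phi> B ys) + (c2 - c1)"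
  proof
    fix ys assume ys: "ys \<in> tuples S m"
    have "F (emb n z K0 ys) = (\<Sum>B\<in>L. g B (restr (emb n z K0 ys) B))"
      using repL emb_tuples[OF fK0(1) _ z] ys unfolding m_def by blast
    also have "\<dots> = (\<Sum>B\<in>L-L'. g B (restr (emb n z K0 ys) B)) + (\<Sum>B\<in>L'. \<phi> B ys)"
      unfolding \<phi>_def using sum.subset_diff[OF LL pfL(1)] by simp
    also have "(\<Sum>B\<in>L-L'. g B (restr (emb n z K0 ys) B)) = c2"
      unfolding c2_def
    proof (rule sum.cong)
      fix B assume B: "B \<in> L - L'"
      then have "B \<inter> K0 = {}" unfolding L'_def by blast
      moreover have "B \<subseteq> {1..n}" "finite B" using pfL(2)[of B] B by auto
      ultimately have "restr (emb n z K0 ys) B = restr (emb n z K0 y0) B"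
        using restr_emb_dep[of B n K0 ys y0 z] by simp
      then show "g B (restr (emb n z K0 ys) B) = g B (restr (emb n z K0 y0) B)" by simp
    qed simp
    finally show "f K0 ys = (\<Sum>B\<in>L'. \<phi> B ys) + (c2 - c1)"
      using c1 ys by (simp add: algebra_simps)
  qed
  have injp: "inj_on (\<lambda>i. pos K0 i + 1) K0" using pos_inj[OF fK0(1)] .
  have neL': "L' \<noteq> {}"
  proof -
    obtain i where "i \<in> K0" using fK0(3) by blast
    then obtain B where "B \<in> L" "i \<in> B" using cover fK0(2) by blast
    then show ?thesis unfolding L'_def using \<open>i \<in> K0\<close> by blast
  qed
  have inj: "inj_on \<pi> L'"
  proof (rule inj_onI)
    fix B1 B2 assume B: "B1 \<in> L'" "B2 \<in> L'" "\<pi> B1 = \<pi> B2"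
    then have "B1 \<inter> K0 = B2 \<inter> K0"
      unfolding \<pi>_def using inj_on_image_eq_iff[OF injp, of "B1 \<inter> K0" "B2 \<inter> K0"] by simp
    then show "B1 = B2" using B pfL(3) unfolding L'_def by blast
  qed
  have UL': "\<Union>(\<pi> ` L') = {1..m}"
  proof -
    have "(\<Union>B\<in>L'. B \<inter> K0) = K0"
    proof
      show "K0 \<subseteq> (\<Union>B\<in>L'. B \<inter> K0)"
      proof
        fix i assume i: "i \<in> K0"
        then obtain B where "B \<in> L" "i \<in> B" using cover fK0(2) by blast
        then show "i \<in> (\<Union>B\<in>L'. B \<inter> K0)" unfolding L'_def using i by blast
      qed
    qed blast
    then have "\<Union>(\<pi> ` L') = (\<lambda>i. pos K0 i + 1) ` K0" unfolding \<pi>_def by blast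
    then show ?thesis using pos_image[OF fK0(1)] unfolding m_def by simp
  qed
  have part: "partition_on {1..m} (\<pi> ` L')"
  proof (rule partition_onI)
    show "\<Union>(\<pi> ` L') = {1..m}" by (rule UL')
  next
    fix p q assume pq: "p \<in> \<pi> ` L'" "q \<in> \<pi> ` L'" "p \<noteq> q"
    then obtain B1 B2 where B: "B1 \<in> L'" "B2 \<in> L'" "p = \<pi> B1" "q = \<pi> B2" by blast
    then have "B1 \<noteq> B2" using pq by blast
    then have "B1 \<inter> B2 = {}" using B pfL(3) LL by blast
    then have "(B1 \<inter> K0) \<inter> (B2 \<inter> K0) = {}" by blast
    then have "\<pi> B1 \<inter> \<pi> B2 = {}" unfolding \<pi>_def
      using inj_on_image_Int[OF injp, of "B1 \<inter> K0" "B2 \<inter> K0"] by auto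
    then show "disjnt p q" using B by (simp add: disjnt_def)
  next
    show "{} \<notin> \<pi> ` L'" unfolding \<pi>_def L'_def by blast
  qed
  have dep: "\<forall>B\<in>L'. \<forall>ys\<in>tuples S m. \<forall>ys'\<in>tuples S m.
        (\<forall>j\<in>\<pi> B. ys!(j-1) = ys'!(j-1)) \<longrightarrow> \<phi> B ys = \<phi> B ys'"
  proof (intro ballI impI)
    fix B and ys ys' :: "'a list"
    assume B: "B \<in> L'" and "ys \<in> tuples S m" "ys' \<in> tuples S m"
      and ag: "\<forall>j\<in>\<pi> B. ys!(j-1) = ys'!(j-1)"
    have "\<forall>i\<in>B\<inter>K0. ys ! pos K0 i = ys' ! pos K0 i"
    proof
      fix i assume "i \<in> B \<inter> K0"
      then have "pos K0 i + 1 \<in> \<pi> B" unfolding \<pi>_def by (rule imageI)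
      then have "ys!(pos K0 i + 1 - 1) = ys'!(pos K0 i + 1 - 1)" using ag by blast
      then show "ys ! pos K0 i = ys' ! pos K0 i" by simp
    qed
    moreover have "B \<subseteq> {1..n}" "finite B" using pfL(2)[of B] B LL by auto
    ultimately have "restr (emb n z K0 ys) B = restr (emb n z K0 ys') B"
      using restr_emb_dep[of B n K0 ys ys' z] by simp
    then show "\<phi> B ys = \<phi> B ys'" unfolding \<phi>_def by simp
  qed
  have "sep_args S m (f K0) (\<pi> ` L')"
    by (rule sep_from_sum[OF finL' neL' inj part dep eq])
  moreover have ns0: "non_sep_args S m (f K0)" using ns K0 unfolding m_def by blast
  ultimately have "\<pi> ` L' = {{1..m}}" unfolding non_sep_args_def by blast
  then have "{1..m} \<in> \<pi> ` L'" by simp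
  then obtain B where B: "B \<in> L'" "\<pi> B = {1..m}" by (metis imageE)
  have "K0 \<subseteq> B"
  proof
    fix i assume i: "i \<in> K0"
    then have "pos K0 i + 1 \<in> {1..m}" using pos_image[OF fK0(1)] unfolding m_def by blast
    then have "pos K0 i + 1 \<in> \<pi> B" using B(2) by simp
    then obtain j where j: "pos K0 i + 1 = pos K0 j + 1" "j \<in> B \<inter> K0"
      unfolding \<pi>_def by (rule imageE)
    then have "i = j" using inj_onD[OF injp j(1) i] by blast
    then show "i \<in> B" using j by blast
  qed
  moreover have "B \<in> L" using B(1) LL by blast
  ultimately show False using nc by blast
qed

theorem lemmaA4:
  fixes S :: "'a set" and z :: 'a and n :: nat
    and F :: "'a list \<Rightarrow> 'g::ab_group_add"
    and K L :: "nat set set"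
    and f g :: "nat set \<Rightarrow> 'a list \<Rightarrow> 'g"
  assumes "z \<in> S"
    and "partition_on {1..n} K" and "partition_on {1..n} L"
    and "\<forall>xs \<in> tuples S n. F xs = (\<Sum>B\<in>K. f B (restr xs B))"
    and "\<forall>xs \<in> tuples S n. F xs = (\<Sum>B\<in>L. g B (restr xs B))"
    and "\<forall>B\<in>K. non_sep_args S (card B) (f B)"
    and "\<forall>B\<in>L. non_sep_args S (card B) (g B)"
  shows "K = L \<and>
    (\<forall>B\<in>K. \<exists>c. \<forall>ys \<in> tuples S (card B). f B ys - g B ys = c)"
proof -
  note pfK = part_facts[OF assms(2)] and pfL = part_facts[OF assms(3)]
  have c1: "\<forall>K0\<in>K. \<exists>B\<in>L. K0 \<subseteq> B"
    using contain[OF assms(1) assms(2) assms(3) assms(4) assms(5) assms(6)] by blast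
  have c2: "\<forall>L0\<in>L. \<exists>B\<in>K. L0 \<subseteq> B"
    using contain[OF assms(1) assms(3) assms(2) assms(5) assms(4) assms(7)] by blast
  have KL: "K \<subseteq> L"
  proof
    fix K0 assume K0: "K0 \<in> K"
    then obtain B where B: "B \<in> L" "K0 \<subseteq> B" using c1 by blast
    then obtain K' where K': "K' \<in> K" "B \<subseteq> K'" using c2 by blast
    have "K0 = K'" using pfK(2)[OF K0] pfK(3)[OF K0 K'(1)] B K' by blast
    then have "B = K0" using B K' by blast
    then show "K0 \<in> L" using B by simp
  qed
  have LK: "L \<subseteq> K"
  proof
    fix L0 assume L0: "L0 \<in> L"
    then obtain B where B: "B \<in> K" "L0 \<subseteq> B" using c2 by blast
    then obtain L' where L': "L' \<in> L" "B \<subseteq> L'" using c1 by blast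
    have "L0 = L'" using pfL(2)[OF L0] pfL(3)[OF L0 L'(1)] B L' by blast
    then have "B = L0" using B L' by blast
    then show "L0 \<in> K" using B by simp
  qed
  have "\<forall>B\<in>K. \<exists>c. \<forall>ys \<in> tuples S (card B). f B ys - g B ys = c"
  proof
    fix B assume B: "B \<in> K"
    then have BL: "B \<in> L" using KL by blast
    obtain a where a: "\<forall>ys\<in>tuples S (card B). F (emb n z B ys) = f B ys + a"
      using L_block[OF assms(1) assms(2) B assms(4)] by blast
    obtain b where b: "\<forall>ys\<in>tuples S (card B). F (emb n z B ys) = g B ys + b"
      using L_block[OF assms(1) assms(3) BL assms(5)] by blast
    have "\<forall>ys \<in> tuples S (card B). f B ys - g B ys = b - a"
    proof
      fix ys assume "ys \<in> tuples S (card B)"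
      then have "f B ys + a = g B ys + b" using a b by metis
      then show "f B ys - g B ys = b - a" by (simp add: algebra_simps)
    qed
    then show "\<exists>c. \<forall>ys \<in> tuples S (card B). f B ys - g B ys = c" by blast
  qed
  then show ?thesis using KL LK by blast
qed

end
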